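(* Let $\mathcal{C}$ be a translation based cipher over $V=(\mathbb{F}_2)^{mn}$ with a proper round $h$, and let $\gamma=\gamma_h$ be the bricklayer transformation of round $h$. Suppose that for some integer $r$ with $1<r<m$, each brick $\gamma_i$ of $\gamma$ is (i) differentially $2^r$-uniform and (ii) strongly $(r-1)$-anti-invariant. Then $\Gamma_h(\mathcal{C})$ is a primitive permutation group on $V$, and hence so is $\Gamma_\infty(\mathcal{C})$.
   Context: Permutations act on the right. Let $m,n>1$ and $V=V_1\oplus\dots\oplus V_n$ with each $V_i\cong(\mathbb{F}_2)^m$. For $v\in V$, $\sigma_v$ is the translation $x\mapsto x+v$. A bricklayer transformation is a permutation $\gamma$ of $V$ with permutations ("bricks") $\gamma_i$ of $V_i$ such that $(v_1+\dots+v_n)\gamma=v_1\gamma_1+\dots+v_n\gamma_n$. A wall is a nontrivial proper subspace of $V$ that is a sum of some $V_i$; $\lambda\in\mathrm{GL}(V)$ is a proper mixing layer if no wall is $\lambda$-invariant. A tb cipher $\mathcal{C}=\{\tau_k:k\in\mathcal{K}\}$ has $\tau_k=\tau_{k,1}\cdots\tau_{k,l}$ with $\tau_{k,h}=\gamma_h\lambda_h\sigma_{\phi(k,h)}$, $\gamma_h$ a key-independent bricklayer transformation with $0\gamma_h=0$, $\lambda_h\in\mathrm{GL}(V)$ key-independent, $\phi:\mathcal{K}\times\{1,\dots,l\}\to V$; a round $h$ is proper if $\lambda_h$ is a proper mixing layer and $k\mapsto\phi(k,h)$ is onto $V$, and a tb cipher has at least one proper round. $\Gamma_h(\mathcal{C})=\langle\tau_{k,h}:k\in\mathcal{K}\rangle$,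 $\Gamma_\infty(\mathcal{C})=\langle\Gamma_1(\mathcal{C}),\dots,\Gamma_l(\mathcal{C})\rangle$. For $f:(\mathbb{F}_2)^m\to(\mathbb{F}_2)^m$ and $u\in(\mathbb{F}_2)^m$, $\hat f_u(x)=f(x+u)+f(x)$. $f$ is differentially $\delta$-uniform if $|\{x:\hat f_u(x)=v\}|\le\delta$ for all $u\ne0$ and all $v$. For $1\le s<m$, $f$ is strongly $s$-anti-invariant if for any two subspaces $U,W$ of $(\mathbb{F}_2)^m$ with $f(U)=W$, either $\dim U=\dim W<m-s$ or $U=W=(\mathbb{F}_2)^m$. *)

theory Defs
  imports "HOL-Analysis.Analysis" "HOL-Library.Z2"
begin

text \<open>Brick space (F_2)^m is bit^'m; V = (F_2)^(mn) is bit^('m \<times> 'n); the i-th brick V_i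
  consists of the coordinates (j,i), j ranging over 'm.\<close>

definition brick :: "'n::finite \<Rightarrow> bit^('m \<times> 'n) \<Rightarrow> bit^'m" where
  "brick i x = (\<chi> j. x $ (j, i))"

definition bricklayer :: "('n::finite \<Rightarrow> bit^'m::finite \<Rightarrow> bit^'m) \<Rightarrow> bit^('m \<times> 'n) \<Rightarrow> bit^('m \<times> 'n)" where
  "bricklayer gs x = (\<chi> p. gs (snd p) (brick (snd p) x) $ fst p)"

definition wall :: "'n::finite set \<Rightarrow> (bit^('m::finite \<times> 'n)) set" where
  "wall I = {x. \<forall>j i. i \<notin> I \<longrightarrow> x $ (j, i) = 0}"

definition in_GL :: "(bit^'a::finite \<Rightarrow> bit^'a) \<Rightarrow> bool" where
  "in_GL f \<longleftrightarrow> Vector_Spaces.linear (*s) (*s) f \<and> bij f"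

definition proper_mixing :: "(bit^('m::finite \<times> 'n::finite) \<Rightarrow> bit^('m \<times> 'n)) \<Rightarrow> bool" where
  "proper_mixing lam \<longleftrightarrow> in_GL lam \<and>
     (\<forall>I. I \<noteq> {} \<and> I \<noteq> UNIV \<longrightarrow> \<not> (lam ` wall I \<subseteq> wall I))"

text \<open>Round map tau_{k,h} = gamma_h lambda_h sigma_{phi(k,h)} (right action: gamma_h applied first).\<close>
definition round_map ::
  "(nat \<Rightarrow> 'n::finite \<Rightarrow> bit^'m::finite \<Rightarrow> bit^'m) \<Rightarrow> (nat \<Rightarrow> bit^('m \<times> 'n) \<Rightarrow> bit^('m \<times> 'n))
   \<Rightarrow> ('k \<Rightarrow> nat \<Rightarrow> bit^('m \<times> 'n)) \<Rightarrow> 'k \<Rightarrow> nat \<Rightarrow> bit^('m \<times> 'n) \<Rightarrow> bit^('m \<times> 'n)" where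
  "round_map g lam phi k h = (\<lambda>x. lam h (bricklayer (g h) x) + phi k h)"

definition proper_round ::
  "(nat \<Rightarrow> bit^('m::finite \<times> 'n::finite) \<Rightarrow> bit^('m \<times> 'n)) \<Rightarrow> ('k \<Rightarrow> nat \<Rightarrow> bit^('m \<times> 'n)) \<Rightarrow> nat \<Rightarrow> bool" where
  "proper_round lam phi h \<longleftrightarrow> proper_mixing (lam h) \<and> surj (\<lambda>k. phi k h)"

definition tb_cipher ::
  "nat \<Rightarrow> (nat \<Rightarrow> 'n::finite \<Rightarrow> bit^'m::finite \<Rightarrow> bit^'m) \<Rightarrow> (nat \<Rightarrow> bit^('m \<times> 'n) \<Rightarrow> bit^('m \<times> 'n))
   \<Rightarrow> ('k \<Rightarrow> nat \<Rightarrow> bit^('m \<times> 'n)) \<Rightarrow> bool" where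
  "tb_cipher l g lam phi \<longleftrightarrow>
     (\<forall>h \<in> {1..l}. (\<forall>i. bij (g h i)) \<and> bricklayer (g h) 0 = 0 \<and> in_GL (lam h)) \<and>
     (\<exists>h \<in> {1..l}. proper_round lam phi h)"

inductive_set perm_group_gen :: "('a \<Rightarrow> 'a) set \<Rightarrow> ('a \<Rightarrow> 'a) set" for S where
  gen_id: "id \<in> perm_group_gen S"
| gen_mult: "f \<in> perm_group_gen S \<Longrightarrow> s \<in> S \<Longrightarrow> s \<circ> f \<in> perm_group_gen S"
| gen_inv: "f \<in> perm_group_gen S \<Longrightarrow> s \<in> S \<Longrightarrow> inv s \<circ> f \<in> perm_group_gen S"

definition Gamma_round :: "(nat \<Rightarrow> 'n::finite \<Rightarrow> bit^'m::finite \<Rightarrow> bit^'m) \<Rightarrow> (nat \<Rightarrow> bit^('m \<times> 'n) \<Rightarrow> bit^('m \<times> 'n)) \<Rightarrow> ('k \<Rightarrow> nat \<Rightarrow> bit^('m \<times> 'n)) \<Rightarrow> nat \<Rightarrow> (bit^('m \<times> 'n) \<Rightarrow> bit^('m \<times> 'n)) set" where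
  "Gamma_round g lam phi h = perm_group_gen {round_map g lam phi k h | k. True}"

definition Gamma_inf :: "nat \<Rightarrow> (nat \<Rightarrow> 'n::finite \<Rightarrow> bit^'m::finite \<Rightarrow> bit^'m) \<Rightarrow> (nat \<Rightarrow> bit^('m \<times> 'n) \<Rightarrow> bit^('m \<times> 'n)) \<Rightarrow> ('k \<Rightarrow> nat \<Rightarrow> bit^('m \<times> 'n)) \<Rightarrow> (bit^('m \<times> 'n) \<Rightarrow> bit^('m \<times> 'n)) set" where
  "Gamma_inf l g lam phi = perm_group_gen {round_map g lam phi k h | k h. h \<in> {1..l}}"

definition transitive_group :: "('a \<Rightarrow> 'a) set \<Rightarrow> bool" where
  "transitive_group G \<longleftrightarrow> (\<forall>x y. \<exists>f \<in> G. f x = y)"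

definition is_block :: "('a \<Rightarrow> 'a) set \<Rightarrow> 'a set \<Rightarrow> bool" where
  "is_block G B \<longleftrightarrow> (\<forall>f \<in> G. f ` B = B \<or> f ` B \<inter> B = {})"

definition primitive_group :: "('a \<Rightarrow> 'a) set \<Rightarrow> bool" where
  "primitive_group G \<longleftrightarrow> transitive_group G \<and>
     (\<forall>B. B \<noteq> {} \<and> is_block G B \<longrightarrow> card B = 1 \<or> B = UNIV)"

definition diff_uniform :: "nat \<Rightarrow> (bit^'m::finite \<Rightarrow> bit^'m) \<Rightarrow> bool" where
  "diff_uniform \<delta> f \<longleftrightarrow> (\<forall>u v. u \<noteq> 0 \<longrightarrow> card {x. f (x + u) + f x = v} \<le> \<delta>)"

definition strongly_anti_invariant :: "nat \<Rightarrow> (bit^'m::finite \<Rightarrow> bit^'m) \<Rightarrow> bool" where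
  "strongly_anti_invariant s f \<longleftrightarrow>
     (\<forall>U W. vec.subspace U \<and> vec.subspace W \<and> f ` U = W \<longrightarrow>
        (vec.dim U = vec.dim W \<and> vec.dim W < CARD('m) - s) \<or> (U = UNIV \<and> W = UNIV))"

end

theory Submission
  imports Defs
begin

lemma UNIV_bit: "(UNIV::bit set) = {0,1}" by (auto intro: bit.exhaust)

instance bit :: finite
  by standard (simp add: UNIV_bit)

lemma card_bit: "CARD(bit) = 2"
  unfolding UNIV_bit by simp

lemma card_bitvec: "CARD(bit^'a::finite) = 2 ^ CARD('a)"
  by (simp add: CARD_vec card_bit)

lemma add_self_vec[simp]: "(x::bit^'a) + x = 0" by (simp add: vec_eq_iff)
lemma add_self_vec2[simp]: "(x::bit^'a) + (x + y) = y"
  by (metis add.assoc add.left_neutral add_self_vec)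

lemma bitvec_add_eq0: "(x::bit^'a) + y = 0 \<Longrightarrow> x = y"
  by (metis add_self_vec2 add.right_neutral)

lemma subspace_bit:
  fixes S :: "(bit^'a) set"
  assumes "0 \<in> S" "\<And>x y. x \<in> S \<Longrightarrow> y \<in> S \<Longrightarrow> x + y \<in> S"
  shows "vec.subspace S"
  unfolding vec.subspace_def
proof (intro conjI ballI allI assms)
  fix c :: bit and x assume "x \<in> S"
  then show "c *s x \<in> S" using assms(1) by (cases c) auto
qed

lemma card_subspace_le:
  fixes S :: "(bit^'a::finite) set"
  assumes "vec.subspace S"
  shows "card S \<le> 2 ^ vec.dim S"
proof -
  obtain B where B: "B \<subseteq> S" "vec.independent B" "S \<subseteq> vec.span B" "card B = vec.dim S"
    by (rule vec.basis_exists)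
  have fB: "finite B" by simp
  have "vec.span B \<subseteq> (\<lambda>T. \<Sum>v\<in>T. v) ` Pow B"
  proof
    fix x assume "x \<in> vec.span B"
    then obtain u where x: "x = (\<Sum>v\<in>B. u v *s v)" using vec.span_finite[OF fB] by auto
    have "x = (\<Sum>v\<in>B. if u v = 1 then v else 0)"
      unfolding x
    proof (rule sum.cong)
      fix v show "u v *s v = (if u v = 1 then v else 0)" by (cases "u v") auto
    qed simp
    also have "\<dots> = (\<Sum>v\<in>{v\<in>B. u v = 1}. v)" by (simp add: sum.inter_filter fB)
    finally show "x \<in> (\<lambda>T. \<Sum>v\<in>T. v) ` Pow B" by auto
  qed
  then have "card S \<le> card ((\<lambda>T. \<Sum>v\<in>T. v) ` Pow B)"
    using B(3) by (intro card_mono) auto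
  also have "\<dots> \<le> card (Pow B)" by (rule card_image_le) (simp add: fB)
  also have "\<dots> = 2 ^ vec.dim S" using B(4) fB by (simp add: card_Pow)
  finally show ?thesis .
qed

lemma count_lemma:
  fixes f :: "bit^'m::finite \<Rightarrow> bit^'m"
  assumes "diff_uniform \<delta> f" "d \<noteq> 0" "\<And>y. f (y + d) + f y \<in> S"
  shows "CARD(bit^'m) \<le> card S * \<delta>"
proof -
  have "UNIV = (\<Union>v\<in>S. {y. f (y + d) + f y = v})" using assms(3) by auto
  hence "CARD(bit^'m) = card (\<Union>v\<in>S. {y. f (y+d) + f y = v})" by simp
  also have "\<dots> \<le> (\<Sum>v\<in>S. card {y. f (y+d) + f y = v})" by (rule card_UN_le) simp
  also have "\<dots> \<le> (\<Sum>v\<in>S. \<delta>)"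
    by (rule sum_mono) (use assms(1,2) in \<open>simp add: diff_uniform_def\<close>)
  finally show ?thesis by simp
qed


definition emb :: "'n::finite \<Rightarrow> bit^'m::finite \<Rightarrow> bit^('m \<times> 'n)" where
  "emb i y = (\<chi> p. if snd p = i then y $ fst p else 0)"

lemma brick_add[simp]: "brick i (x + y) = brick i x + brick i y"
  by (simp add: brick_def vec_eq_iff)
lemma brick_zero[simp]: "brick i 0 = 0" by (simp add: brick_def vec_eq_iff)
lemma brick_bricklayer[simp]: "brick i (bricklayer gs x) = gs i (brick i x)"
  by (simp add: brick_def bricklayer_def vec_eq_iff)
lemma brick_emb[simp]: "brick j (emb i y) = (if j = i then y else 0)"
  by (simp add: brick_def emb_def vec_eq_iff)

lemma vec_eq_bricks:
  fixes x y :: "bit^('m::finite \<times> 'n::finite)"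
  assumes h: "\<And>i. brick i x = brick i y" shows "x = y"
  unfolding vec_eq_iff
proof
  fix p :: "'m \<times> 'n"
  have "brick (snd p) x $ fst p = brick (snd p) y $ fst p" using h by simp
  thus "x $ p = y $ p" by (simp add: brick_def)
qed

lemma emb_add: "emb i (a + b) = emb i a + emb i b"
  by (rule vec_eq_bricks) simp
lemma emb_zero[simp]: "emb i 0 = 0"
  by (rule vec_eq_bricks) simp
lemma emb_inj: "emb i a = emb i b \<Longrightarrow> a = b"
  by (metis brick_emb)

lemma bl_zero: "(\<And>i. gs i 0 = 0) \<Longrightarrow> bricklayer gs 0 = 0"
  by (rule vec_eq_bricks) simp
lemma bl_emb: "(\<And>i. gs i 0 = 0) \<Longrightarrow> bricklayer gs (emb i y) = emb i (gs i y)"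
  by (rule vec_eq_bricks) simp
lemma bl_inj: "(\<And>i. inj (gs i)) \<Longrightarrow> inj (bricklayer gs)"
proof (rule injI)
  fix x y assume h: "\<And>i. inj (gs i)" and e: "bricklayer gs x = bricklayer gs y"
  show "x = y"
  proof (rule vec_eq_bricks)
    fix i have "gs i (brick i x) = gs i (brick i y)" using arg_cong[OF e, of "brick i"] by simp
    thus "brick i x = brick i y" using h injD by metis
  qed
qed

lemma wall_iff: "x \<in> wall I \<longleftrightarrow> (\<forall>i. i \<notin> I \<longrightarrow> brick i x = 0)"
  by (auto simp: wall_def brick_def vec_eq_iff)

lemma wall_sub:
  assumes U0: "0 \<in> U" and Uadd: "\<And>x y. x \<in> U \<Longrightarrow> y \<in> U \<Longrightarrow> x + y \<in> U"
    and emb: "\<And>i y. i \<in> I \<Longrightarrow> emb i y \<in> U"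
  shows "wall I \<subseteq> (U :: (bit^('m::finite \<times> 'n::finite)) set)"
proof -
  have "\<forall>x. x \<in> wall J \<longrightarrow> J \<subseteq> I \<longrightarrow> x \<in> U" if "finite J" for J :: "'n set"
    using that
  proof (induction J rule: finite_induct)
    case empty
    then show ?case
    proof (intro allI impI)
      fix x :: "bit^('m \<times> 'n)" assume "x \<in> wall {}"
      then have "x = 0" by (intro vec_eq_bricks) (simp add: wall_iff)
      then show "x \<in> U" using U0 by simp
    qed
  next
    case (insert j J)
    show ?case
    proof (intro allI impI)
      fix x :: "bit^('m \<times> 'n)" assume x: "x \<in> wall (insert j J)" and sub: "insert j J \<subseteq> I"
      let ?x' = "x + emb j (brick j x)"
      have "?x' \<in> wall J" using x by (auto simp: wall_iff)
      then have "?x' \<in> U" using insert.IH sub by auto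
      moreover have "emb j (brick j x) \<in> U" using emb sub by auto
      ultimately have "?x' + emb j (brick j x) \<in> U" by (rule Uadd)
      then show "x \<in> U" by (simp add: add.assoc)
    qed
  qed
  then show ?thesis by auto
qed

lemma pgg_comp: "f \<in> perm_group_gen S \<Longrightarrow> g \<in> perm_group_gen S \<Longrightarrow> f \<circ> g \<in> perm_group_gen S"
proof (induction f rule: perm_group_gen.induct)
  case gen_id then show ?case by simp
next
  case (gen_mult f s) then show ?case by (metis comp_assoc perm_group_gen.gen_mult)
next
  case (gen_inv f s) then show ?case by (metis comp_assoc perm_group_gen.gen_inv)
qed

lemma pgg_mono: "f \<in> perm_group_gen S \<Longrightarrow> S \<subseteq> T \<Longrightarrow> f \<in> perm_group_gen T"
  by (induction f rule: perm_group_gen.induct) (auto intro: perm_group_gen.intros)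

lemma primitive_mono: "primitive_group G \<Longrightarrow> G \<subseteq> H \<Longrightarrow> primitive_group H"
  unfolding primitive_group_def transitive_group_def is_block_def
proof (intro conjI allI impI)
  assume p: "(\<forall>x y. \<exists>f\<in>G. f x = y) \<and> (\<forall>B. B \<noteq> {} \<and> (\<forall>f\<in>G. f ` B = B \<or> f ` B \<inter> B = {}) \<longrightarrow> card B = 1 \<or> B = UNIV)"
    and s: "G \<subseteq> H"
  fix x y show "\<exists>f\<in>H. f x = y" using p s by blast
next
  fix B assume p: "(\<forall>x y. \<exists>f\<in>G. f x = y) \<and> (\<forall>B. B \<noteq> {} \<and> (\<forall>f\<in>G. f ` B = B \<or> f ` B \<inter> B = {}) \<longrightarrow> card B = 1 \<or> B = UNIV)"
    and s: "G \<subseteq> H" and b: "B \<noteq> {} \<and> (\<forall>f\<in>H. f ` B = B \<or> f ` B \<inter> B = {})"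
  have "\<forall>f\<in>G. f ` B = B \<or> f ` B \<inter> B = {}" using b s by blast
  then show "card B = 1 \<or> B = UNIV" using p b by blast
qed


lemma main_alg:
  fixes gs :: "'n::finite \<Rightarrow> bit^'m::finite \<Rightarrow> bit^'m"
    and lam :: "bit^('m \<times> 'n) \<Rightarrow> bit^('m \<times> 'n)"
    and U :: "(bit^('m \<times> 'n)) set"
  assumes bij: "\<And>i. bij (gs i)" and z: "\<And>i. gs i 0 = 0"
    and du: "\<And>i. diff_uniform (2^r) (gs i)"
    and sai: "\<And>i. strongly_anti_invariant (r - 1) (gs i)"
    and r1: "1 \<le> r" and rm: "r < CARD('m)"
    and pm: "proper_mixing lam"
    and U0: "0 \<in> U" and Uadd: "\<And>x y. x \<in> U \<Longrightarrow> y \<in> U \<Longrightarrow> x + y \<in> U"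
    and Uinv: "\<And>x u. u \<in> U \<Longrightarrow> lam (bricklayer gs (x + u)) + lam (bricklayer gs x) \<in> U"
  shows "U = {0} \<or> U = UNIV"
proof -
  let ?g = "bricklayer gs"
  have lin: "Vector_Spaces.linear (*s) (*s) lam" and lbij: "bij lam"
    using pm by (auto simp: proper_mixing_def in_GL_def)
  have ladd: "lam (a + b) = lam a + lam b" for a b by (rule vec.linear_add[OF lin])
  have l0: "lam 0 = 0" by (rule vec.linear_0[OF lin])
  have ginj: "inj ?g" by (rule bl_inj) (use bij in \<open>simp add: bij_is_inj\<close>)
  have g0: "?g 0 = 0" by (rule bl_zero) (rule z)
  have gemb: "?g (emb i y) = emb i (gs i y)" for i y by (rule bl_emb) (rule z)
  have ginj_i: "inj (gs i)" for i using bij by (simp add: bij_is_inj)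
  define W where "W = {w. lam w \<in> U}"
  have W0: "0 \<in> W" using U0 l0 by (simp add: W_def)
  have Wadd: "a \<in> W \<Longrightarrow> b \<in> W \<Longrightarrow> a + b \<in> W" for a b using Uadd ladd by (simp add: W_def)
  have hW: "u \<in> U \<Longrightarrow> ?g (x + u) + ?g x \<in> W" for x u using Uinv ladd by (simp add: W_def)
  have gU: "u \<in> U \<Longrightarrow> ?g u \<in> W" for u using hW[of u 0] g0 by simp
  have cardW: "card W = card U"
  proof -
    have "W = lam -` U" by (auto simp: W_def)
    then have "lam ` W = U" using lbij by (simp add: surj_image_vimage_eq bij_is_surj)
    moreover have "inj_on lam W" by (rule inj_on_subset[OF bij_is_inj[OF lbij]]) simp
    ultimately show ?thesis by (metis card_image)
  qed
  have gUW: "?g ` U = W"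
  proof (rule card_subset_eq)
    show "finite W" by simp
    show "?g ` U \<subseteq> W" using gU by auto
    show "card (?g ` U) = card W" using cardW card_image[OF inj_on_subset[OF ginj]] by simp
  qed
  define Ui where "Ui i = {y. emb i y \<in> U}" for i
  define Wi where "Wi i = {y. emb i y \<in> W}" for i
  have img: "gs i ` Ui i = Wi i" for i
  proof
    show "gs i ` Ui i \<subseteq> Wi i" unfolding Ui_def Wi_def
      using gU gemb by (auto, metis)
    show "Wi i \<subseteq> gs i ` Ui i"
    proof
      fix w assume "w \<in> Wi i"
      then have "emb i w \<in> ?g ` U" using gUW by (simp add: Wi_def)
      then obtain u where u: "u \<in> U" "emb i w = ?g u" by auto
      let ?y = "inv (gs i) w"
      have gy: "gs i ?y = w" using bij by (simp add: bij_def surj_f_inv_f)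
      have "?g (emb i ?y) = ?g u" using gemb gy u by simp
      then have "emb i ?y = u" using ginj by (simp add: inj_eq)
      then have "?y \<in> Ui i" using u by (simp add: Ui_def)
      then show "w \<in> gs i ` Ui i" using gy by force
    qed
  qed
  have Ui0: "0 \<in> Ui i" for i using U0 by (simp add: Ui_def)
  have Wi0: "0 \<in> Wi i" for i using W0 by (simp add: Wi_def)
  have subU: "vec.subspace (Ui i)" for i
    by (rule subspace_bit) (use U0 Uadd in \<open>auto simp: Ui_def emb_add\<close>)
  have subW: "vec.subspace (Wi i)" for i
    by (rule subspace_bit) (use W0 Wadd in \<open>auto simp: Wi_def emb_add\<close>)
  have cardUi: "card (Ui i) = card (Wi i)" for i
    using card_image[OF inj_on_subset[OF ginj_i subset_UNIV], of i "Ui i"] img[of i] by simp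
  have m_pos: "2 ^ r * 2 ^ (CARD('m) - r) = (2::nat) ^ CARD('m)"
    using rm by (simp add: power_add[symmetric])
  have claimA: "Ui i = UNIV" if d: "d \<in> Ui i" "d \<noteq> 0" for i d
  proof (rule ccontr)
    assume nU: "Ui i \<noteq> UNIV"
    have inS: "gs i (y + d) + gs i y \<in> Wi i - {0}" for y
    proof
      have "?g (emb i y + emb i d) + ?g (emb i y) \<in> W" using hW d by (simp add: Ui_def)
      then show "gs i (y + d) + gs i y \<in> Wi i" by (simp add: Wi_def gemb emb_add[symmetric])
      show "gs i (y + d) + gs i y \<notin> {0}"
      proof
        assume "gs i (y + d) + gs i y \<in> {0}"
        then have "gs i (y + d) = gs i y" by (auto dest: bitvec_add_eq0)
        then have "y + d = y" using ginj_i by (simp add: inj_eq)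
        then have "d = 0" by (metis add_self_vec2 add.commute add_self_vec)
        with d show False by simp
      qed
    qed
    have c1: "CARD(bit^'m) \<le> card (Wi i - {0}) * 2^r"
      by (rule count_lemma[OF du d(2)]) (use inS in simp)
    have c2: "card (Wi i - {0}) = card (Wi i) - 1" using Wi0 by simp
    have "vec.dim (Wi i) < CARD('m) - (r - 1)"
      using sai[of i] subU[of i] subW[of i] img[of i] nU unfolding strongly_anti_invariant_def by blast
    then have "vec.dim (Wi i) \<le> CARD('m) - r" using r1 rm by linarith
    then have "card (Wi i) \<le> 2 ^ (CARD('m) - r)"
      using card_subspace_le[OF subW[of i]] by (meson le_trans one_le_numeral power_increasing)
    moreover have "card (Wi i) \<ge> 1" using Wi0 by (metis One_nat_def Suc_leI card_gt_0_iff empty_iff finite)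
    ultimately have "(card (Wi i) - 1) * 2^r < 2 ^ (CARD('m) - r) * 2^r"
      by (simp add: mult_less_mono1 diff_less_mono le_less_trans)
    with c1 c2 m_pos show False by (simp add: card_bit mult.commute)
  qed
  have claimB: "\<exists>d\<in>Ui i. d \<noteq> 0" if u: "u \<in> U" "brick i u \<noteq> 0" for i u
  proof (rule ccontr)
    assume "\<not> (\<exists>d\<in>Ui i. d \<noteq> 0)"
    then have "Ui i \<subseteq> {0}" by auto
    then have Wz: "Wi i \<subseteq> {0}" using img[of i] z[of i] by (metis image_mono image_empty image_insert)
    let ?a = "brick i u"
    have "gs i (y + ?a) + gs i y = gs i ?a" for y
    proof -
      let ?e = "gs i (y + ?a) + gs i y + gs i ?a"
      have "emb i ?e = ?g (emb i y + u) + ?g (emb i y) + ?g u"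
        by (rule vec_eq_bricks) (auto simp: z)
      moreover have "?g (emb i y + u) + ?g (emb i y) + ?g u \<in> W"
        using hW[OF u(1)] gU[OF u(1)] Wadd by blast
      ultimately have "?e \<in> Wi i" by (simp add: Wi_def)
      then have "?e = 0" using Wz by auto
      then show ?thesis by (rule bitvec_add_eq0)
    qed
    then have "{y. gs i (y + ?a) + gs i y = gs i ?a} = UNIV" by auto
    then have "CARD(bit^'m) \<le> 2^r" using du[of i] u(2) unfolding diff_uniform_def by metis
    moreover have "(2::nat)^r < 2^CARD('m)" using rm by simp
    ultimately show False by (simp add: card_bit)
  qed
  define I where "I = {i. \<exists>u\<in>U. brick i u \<noteq> 0}"
  have embI: "emb i y \<in> U" if iI: "i \<in> I" for i y
  proof -
    obtain u where "u \<in> U" "brick i u \<noteq> 0" using iI by (auto simp: I_def)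
    then obtain d where "d \<in> Ui i" "d \<noteq> 0" using claimB by blast
    then have "Ui i = UNIV" by (rule claimA)
    then show ?thesis by (auto simp: Ui_def)
  qed
  have UI: "U = wall I"
  proof
    show "U \<subseteq> wall I" by (auto simp: I_def wall_iff)
    show "wall I \<subseteq> U" by (rule wall_sub[OF U0 Uadd embI])
  qed
  have "?g ` U \<subseteq> U" unfolding UI by (auto simp: wall_iff z)
  then have WU: "W = U" using gUW cardW by (metis card_subset_eq finite)
  have lamI: "lam ` wall I \<subseteq> wall I"
    using WU UI by (auto simp: W_def)
  have "I = {} \<or> I = UNIV" using pm lamI unfolding proper_mixing_def by blast
  moreover have "wall {} = {0::bit^('m \<times> 'n)}"
    by (auto simp: wall_iff intro: vec_eq_bricks)
  moreover have "wall UNIV = (UNIV :: (bit^('m \<times> 'n)) set)" by (auto simp: wall_iff)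
  ultimately show ?thesis using UI by auto
qed


lemma primitive_from:
  fixes G :: "(bit^'a::finite \<Rightarrow> bit^'a) set" and rho :: "bit^'a \<Rightarrow> bit^'a"
  assumes comp: "\<And>f g. f \<in> G \<Longrightarrow> g \<in> G \<Longrightarrow> f \<circ> g \<in> G"
    and tr: "\<And>v. (\<lambda>x. x + v) \<in> G"
    and rho: "rho \<in> G"
    and key: "\<And>U. 0 \<in> U \<Longrightarrow> (\<And>x y. x \<in> U \<Longrightarrow> y \<in> U \<Longrightarrow> x + y \<in> U)
               \<Longrightarrow> (\<And>x u. u \<in> U \<Longrightarrow> rho (x + u) + rho x \<in> U) \<Longrightarrow> U = {0} \<or> U = UNIV"
  shows "primitive_group G"
  unfolding primitive_group_def
proof (intro conjI allI impI)
  show "transitive_group G" unfolding transitive_group_def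
  proof (intro allI)
    fix x y :: "bit^'a"
    have "(\<lambda>z. z + (x + y)) x = y" by (simp add: add.assoc[symmetric])
    then show "\<exists>f\<in>G. f x = y" using tr[of "x + y"] by (intro bexI[of _ "\<lambda>z. z + (x + y)"])
  qed
next
  fix B :: "(bit^'a) set" assume Bh: "B \<noteq> {} \<and> is_block G B"
  then obtain b0 where b0: "b0 \<in> B" by auto
  have blk: "f \<in> G \<Longrightarrow> z \<in> B \<Longrightarrow> f z \<in> B \<Longrightarrow> f ` B = B" for f z
    using Bh unfolding is_block_def by blast
  define U where "U = {u. b0 + u \<in> B}"
  have U0: "0 \<in> U" using b0 by (simp add: U_def)
  have Uadd: "x + y \<in> U" if "x \<in> U" "y \<in> U" for x y
  proof -
    have "(\<lambda>z. z + x) b0 \<in> B" using that(1) by (simp add: U_def add.commute)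
    then have e: "(\<lambda>z. z + x) ` B = B" by (rule blk[OF tr b0])
    have "(\<lambda>z. z + x) (b0 + y) \<in> B" using that(2) e by (auto simp: U_def)
    then show ?thesis by (simp add: U_def add_ac)
  qed
  have Urho: "rho (x + u) + rho x \<in> U" if "u \<in> U" for x u
  proof -
    let ?f = "(\<lambda>y. y + (rho x + b0)) \<circ> rho \<circ> (\<lambda>y. y + (x + b0))"
    have fG: "?f \<in> G" using comp tr rho by blast
    have e1: "b0 + (x + b0) = x" by (metis add.commute add_self_vec2)
    have fb: "?f b0 = b0" by (simp only: comp_def e1 add_self_vec2)
    have "?f b0 \<in> B" by (subst fb) (rule b0)
    then have e: "?f ` B = B" by (rule blk[OF fG b0])
    have "b0 + u \<in> B" using that by (simp add: U_def)
    then have "?f (b0 + u) \<in> ?f ` B" by (rule imageI)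
    then have "?f (b0 + u) \<in> B" using e by simp
    moreover have "?f (b0 + u) = b0 + (rho (x + u) + rho x)"
    proof -
      have "b0 + u + (x + b0) = x + u" by (metis add.commute add.left_commute add_self_vec2)
      then show ?thesis by (simp only: comp_def add_ac)
    qed
    ultimately show ?thesis unfolding U_def by (metis mem_Collect_eq)
  qed
  have BU: "B = (\<lambda>u. b0 + u) ` U"
  proof
    show "B \<subseteq> (\<lambda>u. b0 + u) ` U"
    proof
      fix b assume "b \<in> B"
      then have "b0 + b \<in> U" by (simp add: U_def)
      moreover have "b = b0 + (b0 + b)" by simp
      ultimately show "b \<in> (\<lambda>u. b0 + u) ` U" by (rule rev_image_eqI)
    qed
    show "(\<lambda>u. b0 + u) ` U \<subseteq> B" by (auto simp: U_def)
  qed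
  from key[OF U0 Uadd Urho] show "card B = 1 \<or> B = UNIV"
  proof
    assume "U = {0}" then show ?thesis using BU by simp
  next
    assume "U = UNIV"
    then have "b \<in> B" for b using BU by (metis UNIV_I add_self_vec2 image_eqI)
    then show ?thesis by auto
  qed
qed


theorem theorem3p1:
  fixes l h r :: nat
    and g :: "nat \<Rightarrow> 'n::finite \<Rightarrow> bit^'m::finite \<Rightarrow> bit^'m"
    and lam :: "nat \<Rightarrow> bit^('m \<times> 'n) \<Rightarrow> bit^('m \<times> 'n)"
    and phi :: "'k \<Rightarrow> nat \<Rightarrow> bit^('m \<times> 'n)"
  assumes "CARD('m) > 1" and "CARD('n) > 1"
    and "tb_cipher l g lam phi"
    and "h \<in> {1..l}" and "proper_round lam phi h"
    and "1 < r" and "r < CARD('m)"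
    and "\<forall>i. diff_uniform (2 ^ r) (g h i)"
    and "\<forall>i. strongly_anti_invariant (r - 1) (g h i)"
  shows "primitive_group (Gamma_round g lam phi h) \<and> primitive_group (Gamma_inf l g lam phi)"
proof -
  note tb = assms(3)[unfolded tb_cipher_def]
  have bijg: "\<And>i. bij (g h i)" and bl0: "bricklayer (g h) 0 = 0" and gl: "in_GL (lam h)"
    using tb assms(4) by auto
  have z: "g h i 0 = 0" for i using arg_cong[OF bl0, of "brick i"] by simp
  have pm: "proper_mixing (lam h)" and sphi: "surj (\<lambda>k. phi k h)"
    using assms(5) by (auto simp: proper_round_def)
  define rho where "rho = (\<lambda>x. lam h (bricklayer (g h) x))"
  define S where "S = {round_map g lam phi k h | k. True}"
  have G: "Gamma_round g lam phi h = perm_group_gen S" by (simp add: Gamma_round_def S_def)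
  obtain k0 where k0: "phi k0 h = 0" using sphi by (metis surjD)
  have rk0: "round_map g lam phi k0 h = rho" by (simp add: round_map_def rho_def k0 fun_eq_iff)
  have rhoS: "rho \<in> S" unfolding S_def using rk0 by blast
  have rhoG: "rho \<in> perm_group_gen S"
    using perm_group_gen.gen_mult[OF perm_group_gen.gen_id rhoS] by simp
  have surj_rho: "surj rho"
  proof -
    have "inj (bricklayer (g h))" by (rule bl_inj) (use bijg in \<open>simp add: bij_is_inj\<close>)
    then have "surj (bricklayer (g h))" by (simp add: finite_UNIV_inj_surj)
    moreover have "surj (lam h)" using gl by (simp add: in_GL_def bij_is_surj)
    ultimately have "surj (lam h \<circ> bricklayer (g h))" by (rule comp_surj)
    moreover have "rho = lam h \<circ> bricklayer (g h)" by (simp add: rho_def fun_eq_iff)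
    ultimately show ?thesis by simp
  qed
  have trG: "(\<lambda>x. x + v) \<in> perm_group_gen S" for v
  proof -
    obtain k where k: "phi k h = v" using sphi by (metis surjD)
    have kS: "round_map g lam phi k h \<in> S" unfolding S_def by blast
    have "round_map g lam phi k h \<circ> (inv rho \<circ> id) \<in> perm_group_gen S"
      by (rule perm_group_gen.gen_mult[OF perm_group_gen.gen_inv[OF perm_group_gen.gen_id rhoS] kS])
    moreover have "round_map g lam phi k h \<circ> (inv rho \<circ> id) = (\<lambda>x. x + v)"
    proof
      fix y
      have "rho (inv rho y) = y" using surj_rho by (simp add: surj_f_inv_f)
      then show "(round_map g lam phi k h \<circ> (inv rho \<circ> id)) y = y + v"
        by (simp add: round_map_def rho_def k)
    qed
    ultimately show ?thesis by simp
  qed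
  have prim: "primitive_group (Gamma_round g lam phi h)"
    unfolding G
  proof (rule primitive_from[OF pgg_comp trG rhoG])
    fix U assume U: "0 \<in> U" "\<And>x y. x \<in> U \<Longrightarrow> y \<in> U \<Longrightarrow> x + y \<in> U"
      "\<And>x u. u \<in> U \<Longrightarrow> rho (x + u) + rho x \<in> U"
    show "U = {0} \<or> U = UNIV"
      by (rule main_alg[where gs="g h" and lam="lam h" and r=r])
        (use bijg z assms(6,7,8,9) pm U in \<open>auto simp: rho_def\<close>)
  qed
  have sub: "Gamma_round g lam phi h \<subseteq> Gamma_inf l g lam phi"
    unfolding G Gamma_inf_def
  proof
    fix f assume "f \<in> perm_group_gen S"
    then show "f \<in> perm_group_gen {round_map g lam phi k h | k h. h \<in> {1..l}}"
      by (rule pgg_mono) (use assms(4) in \<open>auto simp: S_def\<close>)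
  qed
  show ?thesis using prim primitive_mono[OF prim sub] by simp
qed

end
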